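(* Let $G$ be an odd unicyclic graph on $n$ vertices $1,2,\ldots,n$ and edges $e_1,\ldots,e_n$, with cycle $C$ and incidence matrix $M$. Then $M$ is invertible and $M^{-1}=[a_{i,j}]$ is given by $$a_{i,j}=\begin{cases}\frac{(-1)^{d(e_i,j)}}{2} & \text{if } e_i\in C,\\ 0 & \text{if } e_i\notin C \text{ and } j\in G\setminus e_i[C],\\ (-1)^{d(e_i,j)} & \text{if } e_i\notin C\text{ and } j\notin G\setminus e_i[C].\end{cases}$$
   Context: A unicyclic graph on $n$ vertices is a simple connected graph with $n$ edges; it is odd if its unique cycle $C$ has odd length. The incidence matrix $M$ is the $n\times n$ matrix with $(i,j)$-entry $1$ if vertex $i$ is incident with edge $e_j$ and $0$ otherwise. For a vertex $j$ and edge $e_i=\{l_i,m_i\}$, $d(j,e_i)=d(e_i,j):=\min\{d(j,l_i),d(j,m_i)\}$ where $d$ is graph distance. For an edge $e$ not on $C$, $G\setminus e$ has two components; $G\setminus e[C]$ is the one containing $C$. *)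

theory Defs
  imports "Jordan_Normal_Form.Matrix"
begin

definition walk :: "nat set set \<Rightarrow> nat list \<Rightarrow> bool" where
  "walk E xs \<longleftrightarrow> xs \<noteq> [] \<and> (\<forall>i. Suc i < length xs \<longrightarrow> {xs ! i, xs ! Suc i} \<in> E)"

definition reachable :: "nat set set \<Rightarrow> nat \<Rightarrow> nat \<Rightarrow> bool" where
  "reachable E u v \<longleftrightarrow> (\<exists>xs. walk E xs \<and> hd xs = u \<and> last xs = v)"

definition gdist :: "nat set set \<Rightarrow> nat \<Rightarrow> nat \<Rightarrow> nat" where
  "gdist E u v = (LEAST k. \<exists>xs. walk E xs \<and> hd xs = u \<and> last xs = v \<and> length xs = Suc k)"

definition edge_dist :: "nat set set \<Rightarrow> nat set \<Rightarrow> nat \<Rightarrow> nat" where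
  "edge_dist E e v = Min ((\<lambda>u. gdist E u v) ` e)"

definition is_cycle :: "nat set set \<Rightarrow> nat list \<Rightarrow> bool" where
  "is_cycle E cs \<longleftrightarrow> length cs \<ge> 3 \<and> distinct cs \<and>
     (\<forall>i < length cs. {cs ! i, cs ! ((i + 1) mod length cs)} \<in> E)"

definition cycle_edges :: "nat list \<Rightarrow> nat set set" where
  "cycle_edges cs = {{cs ! i, cs ! ((i + 1) mod length cs)} | i. i < length cs}"

text \<open>Simple connected graph on vertices {0..<n} whose edges are e 0, ..., e (n-1),
  pairwise distinct (so exactly n edges): a unicyclic graph.\<close>
definition unicyclic :: "nat \<Rightarrow> (nat \<Rightarrow> nat set) \<Rightarrow> bool" where
  "unicyclic n e \<longleftrightarrow> inj_on e {..<n} \<and>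
     (\<forall>i<n. \<exists>u v. e i = {u, v} \<and> u \<noteq> v \<and> u < n \<and> v < n) \<and>
     (\<forall>u<n. \<forall>v<n. reachable (e ` {..<n}) u v)"

definition comp_C :: "nat set set \<Rightarrow> nat set \<Rightarrow> nat list \<Rightarrow> nat set" where
  "comp_C E f cs = {v. \<exists>c \<in> set cs. reachable (E - {f}) c v}"

definition incidence_mat :: "nat \<Rightarrow> (nat \<Rightarrow> nat set) \<Rightarrow> real mat" where
  "incidence_mat n e = mat n n (\<lambda>(i, j). if i \<in> e j then 1 else 0)"

definition claimed_inverse :: "nat \<Rightarrow> (nat \<Rightarrow> nat set) \<Rightarrow> nat list \<Rightarrow> real mat" where
  "claimed_inverse n e cs = mat n n (\<lambda>(i, j).
     let E = e ` {..<n}; d = edge_dist E (e i) j in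
     if e i \<in> cycle_edges cs then (-1) ^ d / 2
     else if j \<in> comp_C E (e i) cs then 0
     else (-1) ^ d)"

end

theory Submission
  imports Defs "Jordan_Normal_Form.Determinant"
begin


lemma walk_Nil[simp]: "\<not> walk E []" by (simp add: walk_def)
lemma walk_single[simp]: "walk E [x]" by (simp add: walk_def)
lemma walk_Cons_Cons[simp]: "walk E (x # y # xs) \<longleftrightarrow> {x,y} \<in> E \<and> walk E (y # xs)"
proof
  assume h: "walk E (x # y # xs)"
  then have "{x,y} \<in> E" unfolding walk_def by (metis length_Cons nth_Cons_0 nth_Cons_Suc zero_less_Suc Suc_less_eq)
  moreover have "walk E (y # xs)" using h unfolding walk_def
    by (metis Suc_less_eq length_Cons list.distinct(1) nth_Cons_Suc)
  ultimately show "{x,y} \<in> E \<and> walk E (y # xs)" by simp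
next
  assume h: "{x,y} \<in> E \<and> walk E (y # xs)"
  show "walk E (x # y # xs)" unfolding walk_def
  proof (intro conjI allI impI)
    fix i assume "Suc i < length (x # y # xs)"
    then show "{(x # y # xs) ! i, (x # y # xs) ! Suc i} \<in> E" using h unfolding walk_def
      by (cases i) auto
  qed simp
qed

lemma walk_Cons: "walk E (x # xs) \<longleftrightarrow> xs = [] \<or> ({x, hd xs} \<in> E \<and> walk E xs)"
  by (cases xs) auto

lemma walk_append: "walk E (xs @ y # ys) \<longleftrightarrow> walk E (xs @ [y]) \<and> walk E (y # ys)"
  by (induction xs rule: induct_list012) auto

lemma walk_append2: "walk E (xs @ [y]) \<Longrightarrow> walk E (y # ys) \<Longrightarrow> walk E (xs @ y # ys)"
  using walk_append by blast

lemma walk_rev: "walk E xs \<Longrightarrow> walk E (rev xs)"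
proof (induction xs rule: induct_list012)
  case (3 x y zs)
  then have "walk E (rev zs @ [y])" by auto
  moreover have "walk E (y # [x])" using 3 by (auto simp: insert_commute)
  ultimately show ?case using walk_append2[of E "rev zs" y "[x]"] by simp
qed auto

lemma walk_mono: "walk E xs \<Longrightarrow> E \<subseteq> E' \<Longrightarrow> walk E' xs"
  unfolding walk_def by blast

lemma walk_drop: "walk E xs \<Longrightarrow> i < length xs \<Longrightarrow> walk E (drop i xs)"
  unfolding walk_def by auto

lemma walk_take: "walk E xs \<Longrightarrow> 0 < i \<Longrightarrow> walk E (take i xs)"
  unfolding walk_def by auto

lemma walk_edges: "walk E xs \<Longrightarrow> Suc i < length xs \<Longrightarrow> {xs ! i, xs ! Suc i} \<in> E"
  unfolding walk_def by auto

lemma reach_refl[simp]: "reachable E u u"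
  unfolding reachable_def by (rule exI[of _ "[u]"]) simp

lemma reach_sym: "reachable E u v \<Longrightarrow> reachable E v u"
  unfolding reachable_def
  by (metis hd_rev last_rev rev_is_Nil_conv walk_def walk_rev)

lemma reach_trans: assumes "reachable E u v" "reachable E v w" shows "reachable E u w"
proof -
  obtain xs where xs: "walk E xs" "hd xs = u" "last xs = v" using assms(1) reachable_def by blast
  obtain ys where ys: "walk E ys" "hd ys = v" "last ys = w" using assms(2) reachable_def by blast
  have xs': "xs = butlast xs @ [v]" using xs by (metis append_butlast_last_id walk_Nil)
  have ys': "ys = v # tl ys" using ys by (metis list.collapse walk_Nil)
  have "walk E (butlast xs @ v # tl ys)" using xs ys xs' ys' by (metis walk_append2)
  moreover have "hd (butlast xs @ v # tl ys) = u" using xs xs' by (metis hd_append2 list.sel(1) self_append_conv2)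
  moreover have "last (butlast xs @ v # tl ys) = w" using ys ys' by (metis last_appendR list.distinct(1) last_ConsL last_ConsR last.simps)
  ultimately show ?thesis unfolding reachable_def by blast
qed

lemma reach_edge: "{u,v} \<in> E \<Longrightarrow> reachable E u v"
  unfolding reachable_def by (rule exI[of _ "[u,v]"]) simp

lemma reach_mono: "reachable E u v \<Longrightarrow> E \<subseteq> E' \<Longrightarrow> reachable E' u v"
  unfolding reachable_def using walk_mono by blast

lemma walk_reach_set: "walk E xs \<Longrightarrow> y \<in> set xs \<Longrightarrow> reachable E (hd xs) y"
proof (induction xs rule: induct_list012)
  case (3 x y' zs)
  then show ?case by (auto intro: reach_trans reach_edge)
qed auto




lemma shortcut:
  assumes leaf: "\<And>g. g \<in> F \<Longrightarrow> x \<in> g \<Longrightarrow> g = {x,p}" and xp: "x \<noteq> p"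
  shows "walk F xs \<Longrightarrow> hd xs \<noteq> x \<Longrightarrow> last xs \<noteq> x \<Longrightarrow>
    \<exists>ys. walk (F - {{x,p}}) ys \<and> hd ys = hd xs \<and> last ys = last xs \<and>
       even (length xs - length ys) \<and> length ys \<le> length xs"
proof (induction xs rule: length_induct)
  case (1 xs)
  note IH = 1(1)[rule_format]
  show ?case
  proof (cases xs rule: remdups_adj.cases)
    case 1 then show ?thesis using \<open>walk F xs\<close> by simp
  next
    case (2 a) then show ?thesis by (intro exI[of _ xs]) simp
  next
    case (3 a b r)
    have ax: "a \<noteq> x" using 1 3 by simp
    have ab: "{a,b} \<in> F" "walk F (b # r)" using 1 3 by auto
    show ?thesis
    proof (cases "b = x")
      case False
      obtain ys where ys: "walk (F - {{x,p}}) ys" "hd ys = b" "last ys = last (b # r)"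
        "even (length (b # r) - length ys)" "length ys \<le> length (b # r)"
        using IH[of "b # r"] ab 1 3 False by auto
      have "ys \<noteq> []" using ys(1) by auto
      then have "ys = b # tl ys" using ys(2) by (metis list.collapse)
      moreover have "{a,b} \<noteq> {x,p}" using ax False by (metis doubleton_eq_iff)
      ultimately have "walk (F - {{x,p}}) (a # ys)" using ys(1) ab
        by (metis DiffI empty_iff insert_iff walk_Cons_Cons)
      moreover have "length (a # ys) \<le> length xs" "even (length xs - length (a # ys))"
        using ys 3 by auto
      moreover have "last (a # ys) = last xs" using ys 3 \<open>ys \<noteq> []\<close> by simp
      ultimately show ?thesis using 3 by (intro exI[of _ "a # ys"]) simp
    next
      case True
      have ap: "a = p" using leaf[OF ab(1)] True ax by (auto simp: doubleton_eq_iff)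
      have "r \<noteq> []" using 1 3 True by auto
      then obtain c r' where r: "r = c # r'" by (cases r) auto
      have "{x,c} \<in> F" using ab(2) True r by simp
      then have cp: "c = p" using leaf xp by (metis doubleton_eq_iff insertI1)
      obtain ys where ys: "walk (F - {{x,p}}) ys" "hd ys = c" "last ys = last (c # r')"
        "even (length (c # r') - length ys)" "length ys \<le> length (c # r')"
        using IH[of "c # r'"] ab 1 3 r cp xp by (auto simp: walk_Cons)
      show ?thesis using ys 3 r ap cp by (intro exI[of _ ys]) auto
    qed
  qed
qed

lemma card_le_of_odd_walk:
  fixes V :: "nat set"
  assumes "finite V"
    and "\<forall>g\<in>F. \<exists>a b. g = {a,b} \<and> a \<noteq> b \<and> a \<in> V \<and> b \<in> V"
    and "\<forall>x\<in>V. \<forall>y\<in>V. reachable F x y"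
    and "walk F xs" "hd xs = last xs" "even (length xs)"
  shows "card V \<le> card F"
  using assms
proof (induction "card V" arbitrary: V F xs rule: less_induct)
  case less
  note edges = less.prems(2) and conn = less.prems(3)
  have finF: "finite F"
  proof (rule finite_subset)
    show "F \<subseteq> Pow V" using edges by auto
  qed (use less.prems(1) in auto)
  obtain a b r where xs: "xs = a # b # r"
  proof (cases xs)
    case Nil then show ?thesis using less.prems(4) by simp
  next
    case (Cons a t) then show ?thesis using less.prems(6) that by (cases t) auto
  qed
  have abF: "{a,b} \<in> F" using xs less.prems(4) by simp
  then obtain a' b' where "{a,b} = {a',b'}" "a' \<noteq> b'" "a' \<in> V" "b' \<in> V" using edges by blast
  then have abV: "a \<in> V" "b \<in> V" "a \<noteq> b" by (auto simp: doubleton_eq_iff)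
  show ?case
  proof (cases "\<forall>x\<in>V. 2 \<le> card {g\<in>F. x \<in> g}")
    case True
    have "(\<Sum>x\<in>V. card {g\<in>F. x \<in> g}) = (\<Sum>x\<in>V. \<Sum>g\<in>F. if x \<in> g then 1 else 0)"
      using finF by (simp add: sum.If_cases Int_def)
    also have "\<dots> = (\<Sum>g\<in>F. \<Sum>x\<in>V. if x \<in> g then 1 else 0)" by (rule sum.swap)
    also have "\<dots> = (\<Sum>g\<in>F. card (V \<inter> g))"
      using less.prems(1) by (simp add: sum.If_cases)
    also have "\<dots> = (\<Sum>g\<in>F. 2)"
    proof (rule sum.cong)
      fix g assume "g \<in> F"
      then obtain c d where "g = {c,d}" "c \<noteq> d" "c \<in> V" "d \<in> V" using edges by blast
      then show "card (V \<inter> g) = 2" by (simp add: Int_absorb1)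
    qed simp
    finally have "(\<Sum>x\<in>V. card {g\<in>F. x \<in> g}) = 2 * card F" by simp
    moreover have "(\<Sum>x\<in>V. 2) \<le> (\<Sum>x\<in>V. card {g\<in>F. x \<in> g})"
      using True by (intro sum_mono) auto
    ultimately show ?thesis by simp
  next
    case False
    then obtain x where xV: "x \<in> V" and deg: "card {g\<in>F. x \<in> g} < 2" by force
    obtain y where yV: "y \<in> V" "y \<noteq> x" using abV by (cases "a = x") auto
    obtain ws where ws: "walk F ws" "hd ws = x" "last ws = y"
      using conn xV yV unfolding reachable_def by blast
    obtain w2 wr where "ws = x # w2 # wr"
    proof (cases ws)
      case Nil then show ?thesis using ws by simp
    next
      case (Cons a t) then show ?thesis using ws yV that by (cases t) auto
    qed
    then have xg: "{x,w2} \<in> F" using ws by simp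
    then obtain c d where cd: "{x,w2} = {c,d}" "c \<noteq> d" "c \<in> V" "d \<in> V" using edges by blast
    define p where "p = w2"
    have xp: "x \<noteq> p" "p \<in> V" using cd by (auto simp: p_def doubleton_eq_iff)
    have deg1: "{g\<in>F. x \<in> g} = {{x,p}}"
    proof -
      have xpS: "{x,p} \<in> {g\<in>F. x \<in> g}" using xg p_def by simp
      have finS: "finite {g\<in>F. x \<in> g}" using finF by simp
      have "card {g\<in>F. x \<in> g} \<le> Suc 0" using deg by simp
      then have all: "\<forall>a1\<in>{g\<in>F. x \<in> g}. \<forall>a2\<in>{g\<in>F. x \<in> g}. a1 = a2"
        by (subst (asm) card_le_Suc0_iff_eq[OF finS])
      show ?thesis
      proof (intro equalityI subsetI)
        fix g assume gS: "g \<in> {g\<in>F. x \<in> g}"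
        have "g = {x,p}" using bspec[OF bspec[OF all gS] xpS] .
        then show "g \<in> {{x,p}}" by simp
      qed (use xpS in simp)
    qed
    have leaf: "\<And>g. g \<in> F \<Longrightarrow> x \<in> g \<Longrightarrow> g = {x,p}" using deg1 by blast
    define V' where "V' = V - {x}"
    define F' where "F' = F - {{x,p}}"
    have edges': "\<forall>g\<in>F'. \<exists>a b. g = {a,b} \<and> a \<noteq> b \<and> a \<in> V' \<and> b \<in> V'"
    proof
      fix g assume g: "g \<in> F'"
      have gF: "g \<in> F" "g \<noteq> {x,p}" using g unfolding F'_def by auto
      obtain c d where cd: "g = {c,d}" "c \<noteq> d" "c \<in> V" "d \<in> V" using edges gF(1) by blast
      have "x \<notin> g" using leaf gF by blast
      then show "\<exists>a b. g = {a,b} \<and> a \<noteq> b \<and> a \<in> V' \<and> b \<in> V'" using cd unfolding V'_def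
        by (intro exI[of _ c] exI[of _ d]) auto
    qed
    have conn': "\<forall>u\<in>V'. \<forall>v\<in>V'. reachable F' u v"
    proof (intro ballI)
      fix u v assume uv: "u \<in> V'" "v \<in> V'"
      have "u \<in> V" "v \<in> V" using uv unfolding V'_def by auto
      then have "reachable F u v" using conn by blast
      then obtain zs where zs: "walk F zs" "hd zs = u" "last zs = v"
        unfolding reachable_def by blast
      have "hd zs \<noteq> x" "last zs \<noteq> x" using zs uv V'_def by auto
      from shortcut[OF leaf xp(1) zs(1) this] obtain ys where
        "walk (F - {{x,p}}) ys" "hd ys = hd zs" "last ys = last zs" by blast
      then show "reachable F' u v" unfolding F'_def reachable_def using zs by auto
    qed
    have "\<exists>zs. walk F' zs \<and> hd zs = last zs \<and> even (length zs)"
    proof (cases "a = x")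
      case False
      have "hd xs \<noteq> x" "last xs \<noteq> x" using False xs less.prems(5) by auto
      from shortcut[OF leaf xp(1) less.prems(4) this] obtain zs where zs: "walk F' zs" "hd zs = hd xs" "last zs = last xs"
        "even (length xs - length zs)" "length zs \<le> length xs"
        unfolding F'_def by blast
      then show ?thesis using less.prems(5,6)
        by (intro exI[of _ zs]) (auto simp: even_diff_nat)
    next
      case True
      have bp: "b = p" using leaf[OF abF] True abV by (auto simp: doubleton_eq_iff)
      have lx: "last (b # r) = x" using less.prems(5) xs True by simp
      define zs where "zs = butlast (b # r)"
      have bx: "b # r = zs @ [x]" using append_butlast_last_id[of "b # r"] lx zs_def by simp
      have "zs \<noteq> []" using bx bp xp by auto
      then obtain zs0 z where zsd: "zs = zs0 @ [z]" by (metis append_butlast_last_id)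
      have "walk F (b # r)" using less.prems(4) xs by simp
      then have wzs: "walk F (zs0 @ [z, x])" using bx zsd by simp
      then have "{z, x} \<in> F" "walk F (zs0 @ [z])"
        using walk_append[of F zs0 z "[x]"] by auto
      then have zp: "z = p" using leaf[of "{z,x}"] xp by (auto simp: doubleton_eq_iff)
      have hzs: "hd zs = p" using bx bp \<open>zs \<noteq> []\<close> by (cases zs) auto
      have lzs: "last zs = p" using zsd zp by simp
      have ezs: "even (length zs)" using less.prems(6) xs bx by simp
      have w1: "walk F zs" using \<open>walk F (zs0 @ [z])\<close> zsd by simp
      have w2: "hd zs \<noteq> x" "last zs \<noteq> x" using hzs lzs xp by auto
      have "\<exists>ys. walk (F - {{x,p}}) ys \<and> hd ys = hd zs \<and> last ys = last zs \<and>
       even (length zs - length ys) \<and> length ys \<le> length zs"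
        using shortcut[OF leaf xp(1) w1 w2] .
      then obtain ys where ys0: "walk F' ys" "hd ys = hd zs" "last ys = last zs"
        "even (length zs - length ys)" "length ys \<le> length zs"
        unfolding F'_def by blast
      then have ys: "walk F' ys" "hd ys = p" "last ys = p"
        "even (length zs - length ys)" "length ys \<le> length zs" using hzs lzs by auto
      then show ?thesis using ezs by (intro exI[of _ ys]) (auto simp: even_diff_nat)
    qed
    then obtain zs where zs: "walk F' zs" "hd zs = last zs" "even (length zs)" by blast
    have cV: "card V' < card V" unfolding V'_def by (rule card_Diff1_less[OF less.prems(1) xV])
    have "card V' \<le> card F'"
    proof (rule less.hyps[OF cV _ edges' conn' zs])
      show "finite V'" using less.prems(1) unfolding V'_def by simp
    qed
    moreover have "card F' = card F - 1" using F'_def xg p_def finF by simp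
    moreover have "card V' = card V - 1" using V'_def xV by simp
    moreover have "card F \<ge> 1" using finF xg card_0_eq[OF finF] by (cases "card F") auto
    ultimately show ?thesis by linarith
  qed
qed




definition pwalk :: "nat set set \<Rightarrow> nat \<Rightarrow> nat \<Rightarrow> nat \<Rightarrow> bool" where
  "pwalk E u v k \<longleftrightarrow> (\<exists>xs. walk E xs \<and> hd xs = u \<and> last xs = v \<and> length xs = Suc k)"

lemma pw_refl: "pwalk E u u 0"
  unfolding pwalk_def by (rule exI[of _ "[u]"]) simp

lemma pw_edge: "{u,v} \<in> E \<Longrightarrow> pwalk E u v 1"
  unfolding pwalk_def by (rule exI[of _ "[u,v]"]) simp

lemma pw_sym: assumes "pwalk E u v k" shows "pwalk E v u k"
proof -
  obtain xs where xs: "walk E xs" "hd xs = u" "last xs = v" "length xs = Suc k"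
    using assms unfolding pwalk_def by blast
  have "xs \<noteq> []" using xs(1) by auto
  then have "walk E (rev xs)" "hd (rev xs) = v" "last (rev xs) = u" "length (rev xs) = Suc k"
    using xs by (auto simp: walk_rev hd_rev last_rev)
  then show ?thesis unfolding pwalk_def by blast
qed

lemma pw_trans: assumes "pwalk E u v k1" "pwalk E v w k2" shows "pwalk E u w (k1 + k2)"
proof -
  obtain xs where xs: "walk E xs" "hd xs = u" "last xs = v" "length xs = Suc k1"
    using assms(1) unfolding pwalk_def by blast
  obtain ys where ys: "walk E ys" "hd ys = v" "last ys = w" "length ys = Suc k2"
    using assms(2) unfolding pwalk_def by blast
  have xs': "xs = butlast xs @ [v]" using xs by (metis append_butlast_last_id walk_Nil)
  have ys': "ys = v # tl ys" using ys by (metis list.collapse walk_Nil)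
  have "walk E (butlast xs @ v # tl ys)" using xs ys xs' ys' by (metis walk_append2)
  moreover have "hd (butlast xs @ v # tl ys) = u" using xs(2) xs' by (cases "butlast xs") auto
  moreover have "last (butlast xs @ v # tl ys) = w" using ys(3) ys' by (cases "tl ys") auto
  moreover have "length (butlast xs @ v # tl ys) = Suc (k1 + k2)" using xs(4) ys(4) by simp
  ultimately show ?thesis unfolding pwalk_def by blast
qed

lemma pw_mono: "pwalk E u v k \<Longrightarrow> E \<subseteq> E' \<Longrightarrow> pwalk E' u v k"
  unfolding pwalk_def using walk_mono by blast

lemma pw_reach: "pwalk E u v k \<Longrightarrow> reachable E u v"
  unfolding pwalk_def reachable_def by blast

lemma reach_pw: "reachable E u v \<Longrightarrow> \<exists>k. pwalk E u v k"
  unfolding pwalk_def reachable_def by (metis length_greater_0_conv walk_Nil Suc_pred)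

lemma walk_minus_or:
  "walk E xs \<Longrightarrow> reachable (E - {f}) (hd xs) (last xs) \<or> (\<exists>w\<in>f. reachable (E - {f}) (hd xs) w)"
proof (induction xs rule: induct_list012)
  case (3 x y zs)
  have e: "{x,y} \<in> E" and w: "walk E (y # zs)" using 3(3) by auto
  show ?case
  proof (cases "{x,y} = f")
    case True
    then show ?thesis by auto
  next
    case False
    then have r: "reachable (E - {f}) x y" using e by (intro reach_edge) auto
    from 3(2)[OF w] show ?thesis
    proof
      assume "reachable (E - {f}) (hd (y # zs)) (last (y # zs))"
      then have "reachable (E - {f}) x (last (y # zs))" using reach_trans[OF r] by simp
      then show ?thesis by simp
    next
      assume "\<exists>w\<in>f. reachable (E - {f}) (hd (y # zs)) w"
      then obtain w where "w \<in> f" "reachable (E - {f}) y w" by auto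
      then have "reachable (E - {f}) x w" using reach_trans[OF r] by simp
      then show ?thesis using \<open>w \<in> f\<close> by auto
    qed
  qed
qed auto

lemma walk_reach_minus:
  assumes "f = {u,v}" "reachable (E - {f}) u v"
  shows "walk E xs \<Longrightarrow> reachable (E - {f}) (hd xs) (last xs)"
proof (induction xs rule: induct_list012)
  case (3 x y zs)
  have e: "{x,y} \<in> E" and w: "walk E (y # zs)" using 3(3) by auto
  have "reachable (E - {f}) x y"
  proof (cases "{x,y} = f")
    case True
    then have "(x = u \<and> y = v) \<or> (x = v \<and> y = u)" using assms(1) by (auto simp: doubleton_eq_iff)
    then show ?thesis using assms(2) reach_sym[OF assms(2)] by auto
  next
    case False then show ?thesis using e by (intro reach_edge) auto
  qed
  moreover have "reachable (E - {f}) y (last (y # zs))" using 3(2)[OF w] by simp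
  ultimately have "reachable (E - {f}) x (last (y # zs))" by (rule reach_trans)
  then show ?case by simp
qed auto

lemma reach_minus:
  assumes "f = {u,v}" "reachable (E - {f}) u v" "reachable E x y"
  shows "reachable (E - {f}) x y"
proof -
  obtain xs where "walk E xs" "hd xs = x" "last xs = y" using assms(3) unfolding reachable_def by blast
  with walk_reach_minus[OF assms(1,2)] show ?thesis by blast
qed

lemma walk_avoid:
  assumes "walk E xs" "\<forall>y\<in>set xs. y \<notin> S" "z \<in> g" "z \<in> S"
  shows "walk (E - {g}) xs"
  unfolding walk_def
proof (intro conjI allI impI)
  show "xs \<noteq> []" using assms(1) by auto
next
  fix i assume i: "Suc i < length xs"
  have "{xs ! i, xs ! Suc i} \<in> E" using walk_edges[OF assms(1) i] .
  moreover have "xs ! i \<notin> S" "xs ! Suc i \<notin> S" using assms(2) i by auto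
  then have "{xs ! i, xs ! Suc i} \<noteq> g" using assms(3,4) by auto
  ultimately show "{xs ! i, xs ! Suc i} \<in> E - {g}" by simp
qed

lemma walk_not_minus:
  assumes "walk E xs" "\<not> walk (E - {f}) xs"
  shows "\<exists>i. Suc i < length xs \<and> {xs ! i, xs ! Suc i} = f"
proof -
  have "xs \<noteq> []" using assms(1) by auto
  then obtain i where "Suc i < length xs" "{xs ! i, xs ! Suc i} \<notin> E - {f}"
    using assms(2) unfolding walk_def by blast
  then show ?thesis using walk_edges[OF assms(1)] by blast
qed

lemma gdist_walk:
  assumes "reachable E u v"
  shows "\<exists>xs. walk E xs \<and> hd xs = u \<and> last xs = v \<and> length xs = Suc (gdist E u v)"
proof -
  obtain xs where xs: "walk E xs" "hd xs = u" "last xs = v" using assms unfolding reachable_def by blast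
  then have "\<exists>k xs. walk E xs \<and> hd xs = u \<and> last xs = v \<and> length xs = Suc k"
    by (metis length_greater_0_conv walk_Nil Suc_pred)
  then show ?thesis unfolding gdist_def by (rule LeastI_ex)
qed

lemma gdist_pw: "reachable E u v \<Longrightarrow> pwalk E u v (gdist E u v)"
  unfolding pwalk_def by (rule gdist_walk)

lemma gdist_le: "pwalk E u v k \<Longrightarrow> gdist E u v \<le> k"
  unfolding gdist_def pwalk_def by (rule Least_le)

lemma gdist_refl[simp]: "gdist E u u = 0"
  using gdist_le[OF pw_refl] by simp

lemma gdist_edge: "reachable E u a \<Longrightarrow> {a,b} \<in> E \<Longrightarrow> gdist E u b \<le> Suc (gdist E u a)"
  using gdist_le[OF pw_trans[OF gdist_pw pw_edge]] by simp

lemma edge_dist_pair: "edge_dist E {p,q} x = min (gdist E p x) (gdist E q x)"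
  unfolding edge_dist_def by simp




locale ug =
  fixes n :: nat and e :: "nat \<Rightarrow> nat set" and cs :: "nat list"
  assumes uni: "unicyclic n e" and cyc: "is_cycle (e ` {..<n}) cs" and oddl: "odd (length cs)"
begin

abbreviation "EE \<equiv> e ` {..<n}"
abbreviation "L \<equiv> length cs"

lemma inj: "inj_on e {..<n}" using uni unfolding unicyclic_def by blast

lemma edges: "g \<in> EE \<Longrightarrow> \<exists>u v. g = {u,v} \<and> u \<noteq> v \<and> u < n \<and> v < n"
  using uni unfolding unicyclic_def by blast

lemma conn: "u < n \<Longrightarrow> v < n \<Longrightarrow> reachable EE u v"
  using uni unfolding unicyclic_def by blast

lemma cardE: "card EE = n"
  using card_image[OF inj] by simp

lemma L3: "3 \<le> L" and dist: "distinct cs"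
  and cedge: "i < L \<Longrightarrow> {cs ! i, cs ! ((i + 1) mod L)} \<in> EE"
  using cyc unfolding is_cycle_def by auto

lemma cs_lt: assumes "i < L" shows "cs ! i < n"
proof -
  obtain u v where "{cs ! i, cs ! ((i + 1) mod L)} = {u,v}" "u < n" "v < n"
    using edges[OF cedge[OF assms]] by blast
  then show ?thesis by (auto simp: doubleton_eq_iff)
qed

lemma cyc_sub: "cycle_edges cs \<subseteq> EE"
  unfolding cycle_edges_def using cedge by blast

lemma L0: "0 < L" using L3 by linarith

lemma npos: "0 < n"
proof -
  have "cs ! 0 < n" using L0 by (rule cs_lt)
  then show ?thesis by simp
qed

definition cw :: "nat list" where "cw = map (\<lambda>k. cs ! (k mod L)) [0..<Suc L]"

lemma cw_walk: "walk (cycle_edges cs) cw"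
  unfolding walk_def
proof (intro conjI allI impI)
  show "cw \<noteq> []" unfolding cw_def by simp
next
  fix k assume k: "Suc k < length cw"
  then have kL: "k < L" unfolding cw_def by simp
  have "cw ! k = cs ! k" "cw ! Suc k = cs ! ((k + 1) mod L)"
    using kL unfolding cw_def by (simp_all del: upt_Suc)
  then show "{cw ! k, cw ! Suc k} \<in> cycle_edges cs"
    unfolding cycle_edges_def using kL by auto
qed

lemma cw_props: "hd cw = cs ! 0" "last cw = cs ! 0" "length cw = Suc L"
  unfolding cw_def by (simp_all add: hd_map last_map del: upt_Suc)

lemma cw_pw: "pwalk (cycle_edges cs) (cs ! 0) (cs ! 0) L"
  unfolding pwalk_def using cw_walk cw_props by blast

lemma cw_set: "k < L \<Longrightarrow> cs ! k \<in> set cw"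
  unfolding cw_def set_map by (rule image_eqI[of _ _ k]) auto

lemma cyc_reach: "k < L \<Longrightarrow> reachable (cycle_edges cs) (cs ! 0) (cs ! k)"
  using walk_reach_set[OF cw_walk cw_set] cw_props by simp

lemma no_odd:
  assumes g: "g \<in> EE" and c: "\<And>x y. x < n \<Longrightarrow> y < n \<Longrightarrow> reachable (EE - {g}) x y"
    and pw: "pwalk (EE - {g}) a a k" and o: "odd k"
  shows False
proof -
  obtain xs where xs: "walk (EE - {g}) xs" "hd xs = a" "last xs = a" "length xs = Suc k"
    using pw unfolding pwalk_def by blast
  have "card {..<n} \<le> card (EE - {g})"
  proof (rule card_le_of_odd_walk[OF _ _ _ xs(1)])
    show "\<forall>g'\<in>EE - {g}. \<exists>a b. g' = {a, b} \<and> a \<noteq> b \<and> a \<in> {..<n} \<and> b \<in> {..<n}"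
      using edges by auto
    show "\<forall>x\<in>{..<n}. \<forall>y\<in>{..<n}. reachable (EE - {g}) x y" using c by auto
    show "hd xs = last xs" using xs by simp
    show "even (length xs)" using xs o by simp
  qed simp
  moreover have "card (EE - {g}) = n - 1" using g cardE by (simp add: card_Diff_singleton)
  ultimately show False using npos by simp
qed

lemma cyc_edge_inj:
  assumes j: "j < L" and i: "i < L"
    and eq: "{cs ! j, cs ! ((j + 1) mod L)} = {cs ! i, cs ! ((i + 1) mod L)}"
  shows "j = i"
proof -
  have jm: "(j + 1) mod L < L" and im: "(i + 1) mod L < L" using L0 by auto
  from eq have "(cs ! j = cs ! i \<and> cs ! ((j + 1) mod L) = cs ! ((i + 1) mod L)) \<or>
      (cs ! j = cs ! ((i + 1) mod L) \<and> cs ! ((j + 1) mod L) = cs ! i)"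
    by (auto simp: doubleton_eq_iff)
  then show ?thesis
  proof
    assume "cs ! j = cs ! i \<and> cs ! ((j + 1) mod L) = cs ! ((i + 1) mod L)"
    then show ?thesis using nth_eq_iff_index_eq[OF dist j i] by simp
  next
    assume h: "cs ! j = cs ! ((i + 1) mod L) \<and> cs ! ((j + 1) mod L) = cs ! i"
    then have 1: "j = (i + 1) mod L" and 2: "(j + 1) mod L = i"
      using nth_eq_iff_index_eq[OF dist j im] nth_eq_iff_index_eq[OF dist jm i] by auto
    show ?thesis
    proof (cases "i + 1 < L")
      case True
      then have "j = i + 1" using 1 by simp
      then have "(i + 2) mod L = i" using 2 by simp
      moreover have "(i + 2) mod L \<noteq> i"
      proof (cases "i + 2 < L")
        case True then show ?thesis by simp
      next
        case False
        then have "i + 2 = L" using \<open>i + 1 < L\<close> by simp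
        then show ?thesis using L3 by simp
      qed
      ultimately show ?thesis by simp
    next
      case False
      then have "i + 1 = L" using i by simp
      then have "j = 0" using 1 by simp
      then have "i = 1 mod L" using 2 by simp
      then show ?thesis using L3 \<open>i + 1 = L\<close> by simp
    qed
  qed
qed

lemma mod_ne: assumes "i < L" "k + 1 < L" shows "(i + 1 + k) mod L \<noteq> i"
proof (cases "i + 1 + k < L")
  case True then show ?thesis by simp
next
  case False
  then have "(i + 1 + k) mod L = (i + 1 + k - L) mod L" by (simp add: le_mod_geq)
  also have "\<dots> = i + 1 + k - L" using assms by simp
  finally show ?thesis using assms False by simp
qed

lemma detour:
  assumes i: "i < L"
  shows "pwalk (EE - {{cs ! i, cs ! ((i + 1) mod L)}}) (cs ! ((i + 1) mod L)) (cs ! i) (L - 1)"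
proof -
  define f where "f = {cs ! i, cs ! ((i + 1) mod L)}"
  define dw where "dw = map (\<lambda>k. cs ! ((i + 1 + k) mod L)) [0..<L]"
  have len: "length dw = L" unfolding dw_def by simp
  have "walk (EE - {f}) dw"
    unfolding walk_def
  proof (intro conjI allI impI)
    show "dw \<noteq> []" using L3 len by auto
  next
    fix k assume k: "Suc k < length dw"
    define j where "j = (i + 1 + k) mod L"
    have jL: "j < L" using L0 j_def by simp
    have "dw ! k = cs ! j" using k len unfolding dw_def j_def by simp
    moreover have "dw ! Suc k = cs ! ((j + 1) mod L)"
      using k len unfolding dw_def j_def by (simp add: mod_Suc_eq)
    moreover have "{cs ! j, cs ! ((j + 1) mod L)} \<in> EE" using cedge[OF jL] .
    moreover have "j \<noteq> i" using mod_ne[OF i, of k] k len j_def by simp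
    then have "{cs ! j, cs ! ((j + 1) mod L)} \<noteq> f"
      using cyc_edge_inj[OF jL i] f_def by blast
    ultimately show "{dw ! k, dw ! Suc k} \<in> EE - {f}" by simp
  qed
  moreover have "hd dw = cs ! ((i + 1) mod L)" unfolding dw_def using L0
    by (simp add: upt_conv_Cons)
  moreover have "last dw = cs ! i"
  proof -
    have "dw \<noteq> []" using len L0 by auto
    then have "last dw = dw ! (L - 1)" using len by (simp add: last_conv_nth)
    also have "\<dots> = cs ! ((i + 1 + (L - 1)) mod L)" unfolding dw_def using L0 by (simp add: nth_upt)
    also have "(i + 1 + (L - 1)) = i + L" using L3 by simp
    finally show ?thesis using i by simp
  qed
  ultimately show ?thesis unfolding pwalk_def f_def using len L3
    by (intro exI[of _ dw]) simp
qed

end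



context ug
begin

abbreviation "compC f \<equiv> comp_C EE f cs"
abbreviation "ed f x \<equiv> edge_dist EE f x"

lemma comp_closed: "x \<in> compC f \<Longrightarrow> reachable (EE - {f}) x y \<Longrightarrow> y \<in> compC f"
  unfolding comp_C_def using reach_trans by blast

lemma comp_c0:
  assumes "f \<notin> cycle_edges cs"
  shows "x \<in> compC f \<longleftrightarrow> reachable (EE - {f}) (cs ! 0) x"
proof
  assume "x \<in> compC f"
  then obtain c where c: "c \<in> set cs" "reachable (EE - {f}) c x" unfolding comp_C_def by blast
  then obtain k where k: "k < L" "c = cs ! k" by (metis in_set_conv_nth)
  have "cycle_edges cs \<subseteq> EE - {f}" using cyc_sub assms by blast
  then have "reachable (EE - {f}) (cs ! 0) c" using reach_mono[OF cyc_reach[OF k(1)]] k by simp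
  then show "reachable (EE - {f}) (cs ! 0) x" using c(2) by (rule reach_trans)
next
  assume "reachable (EE - {f}) (cs ! 0) x"
  moreover have "cs ! 0 \<in> set cs" using L0 by simp
  ultimately show "x \<in> compC f" unfolding comp_C_def by blast
qed

lemma cyc_conn:
  assumes "f \<in> cycle_edges cs" "x < n" "y < n"
  shows "reachable (EE - {f}) x y"
proof -
  obtain i where i: "i < L" "f = {cs ! i, cs ! ((i + 1) mod L)}"
    using assms(1) unfolding cycle_edges_def by blast
  have "reachable (EE - {f}) (cs ! i) (cs ! ((i + 1) mod L))"
    using reach_sym[OF pw_reach[OF detour[OF i(1)]]] i(2) by simp
  from reach_minus[OF i(2) this conn[OF assms(2,3)]] show ?thesis .
qed

lemma ed_walk:
  assumes f: "f \<in> EE" and x: "x < n"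
  shows "\<exists>w\<in>f. pwalk (EE - {f}) w x (ed f x)"
proof -
  obtain p q where pq: "f = {p,q}" "p < n" "q < n" using edges[OF f] by blast
  obtain w where w: "w \<in> f" "gdist EE w x = ed f x" "\<And>w'. w' \<in> f \<Longrightarrow> gdist EE w x \<le> gdist EE w' x"
  proof (cases "gdist EE p x \<le> gdist EE q x")
    case True
    show ?thesis
    proof (rule that[of p])
      show "p \<in> f" using pq by simp
      show "gdist EE p x = ed f x" using True pq by (simp add: edge_dist_pair)
      fix w' assume "w' \<in> f" then show "gdist EE p x \<le> gdist EE w' x" using True pq by auto
    qed
  next
    case False
    show ?thesis
    proof (rule that[of q])
      show "q \<in> f" using pq by simp
      show "gdist EE q x = ed f x" using False pq by (simp add: edge_dist_pair)
      fix w' assume "w' \<in> f" then show "gdist EE q x \<le> gdist EE w' x" using False pq by auto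
    qed
  qed
  have wn: "w < n" using w(1) pq by auto
  obtain xs where xs: "walk EE xs" "hd xs = w" "last xs = x" "length xs = Suc (gdist EE w x)"
    using gdist_walk[OF conn[OF wn x]] by blast
  show ?thesis
  proof (cases "walk (EE - {f}) xs")
    case True
    then show ?thesis using xs w unfolding pwalk_def by auto
  next
    case False
    obtain i where i: "Suc i < length xs" "{xs ! i, xs ! Suc i} = f"
      using walk_not_minus[OF xs(1) False] by blast
    define ys where "ys = drop (Suc i) xs"
    have "walk EE ys" using walk_drop[OF xs(1) i(1)] ys_def by simp
    moreover have "hd ys = xs ! Suc i" using i(1) ys_def by (simp add: hd_drop_conv_nth)
    moreover have "last ys = x" using i(1) ys_def xs(3) by simp
    moreover have "length ys = Suc (length xs - Suc (Suc i))" using i(1) ys_def by simp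
    ultimately have "pwalk EE (xs ! Suc i) x (length xs - Suc (Suc i))" unfolding pwalk_def by blast
    then have "gdist EE (xs ! Suc i) x \<le> length xs - Suc (Suc i)" by (rule gdist_le)
    moreover have "gdist EE w x \<le> gdist EE (xs ! Suc i) x" using w(3) i(2) by auto
    ultimately show ?thesis using xs(4) i(1) by simp
  qed
qed

lemma ed_le:
  assumes f: "f \<in> EE" and ab: "{a,b} \<in> EE"
  shows "ed f b \<le> Suc (ed f a)"
proof -
  obtain p q where pq: "f = {p,q}" "p < n" "q < n" using edges[OF f] by blast
  have "a < n" using edges[OF ab] by (auto simp: doubleton_eq_iff)
  then have "gdist EE p b \<le> Suc (gdist EE p a)" "gdist EE q b \<le> Suc (gdist EE q a)"
    using gdist_edge[OF conn ab] pq by auto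
  then show ?thesis using pq by (auto simp: edge_dist_pair)
qed

lemma ab_lt: "{a,b} \<in> EE \<Longrightarrow> a < n \<and> b < n \<and> a \<noteq> b"
  using edges by (fastforce simp: doubleton_eq_iff)

lemma cyc_par:
  assumes f: "f \<in> cycle_edges cs" and ab: "{a,b} \<in> EE" "{a,b} \<noteq> f"
  shows "ed f a \<noteq> ed f b"
proof
  assume eq: "ed f a = ed f b"
  define t where "t = ed f a"
  have fE: "f \<in> EE" using f cyc_sub by blast
  obtain i where i: "i < L" "f = {cs ! i, cs ! ((i + 1) mod L)}"
    using f unfolding cycle_edges_def by blast
  have abn: "a < n" "b < n" using ab_lt[OF ab(1)] by auto
  obtain p where p: "p \<in> f" "pwalk (EE - {f}) p a t" using ed_walk[OF fE abn(1)] t_def by blast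
  obtain q where q: "q \<in> f" "pwalk (EE - {f}) q b t" using ed_walk[OF fE abn(2)] t_def eq by auto
  have eba: "pwalk (EE - {f}) b a 1" using ab by (intro pw_edge) (auto simp: insert_commute)
  have "\<exists>k. odd k \<and> pwalk (EE - {f}) a a k"
  proof (cases "p = q")
    case True
    have q': "pwalk (EE - {f}) p b t" using q(2) True by simp
    have "pwalk (EE - {f}) a a (t + (t + 1))"
      using pw_trans[OF pw_sym[OF p(2)] pw_trans[OF q' eba]] by simp
    then show ?thesis by (intro exI[of _ "t + (t + 1)"]) simp
  next
    case False
    have d: "pwalk (EE - {f}) (cs ! ((i + 1) mod L)) (cs ! i) (L - 1)" using detour[OF i(1)] i(2) by simp
    have "pwalk (EE - {f}) p q (L - 1)"
    proof -
      have "(p = cs ! i \<and> q = cs ! ((i + 1) mod L)) \<or> (p = cs ! ((i + 1) mod L) \<and> q = cs ! i)"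
        using p(1) q(1) False i(2) by auto
      then show ?thesis using d pw_sym[OF d] by auto
    qed
    then have "pwalk (EE - {f}) a a (t + ((L - 1) + (t + 1)))"
      using pw_trans[OF pw_sym[OF p(2)] pw_trans[OF _ pw_trans[OF q(2) eba]]] by blast
    moreover have "odd (t + ((L - 1) + (t + 1)))" using oddl L3 by simp
    ultimately show ?thesis by blast
  qed
  then obtain k where "odd k" "pwalk (EE - {f}) a a k" by blast
  then show False using no_odd[OF fE cyc_conn[OF f]] by blast
qed

lemma nc_one:
  assumes f: "f \<in> EE" "f \<notin> cycle_edges cs" and uv: "f = {u,v}"
  shows "u \<in> compC f \<or> v \<in> compC f"
proof -
  have un: "u < n" using edges[OF f(1)] uv by (auto simp: doubleton_eq_iff)
  have c0: "cs ! 0 < n" using cs_lt L0 by blast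
  obtain xs where xs: "walk EE xs" "hd xs = cs ! 0" "last xs = u"
    using conn[OF c0 un] unfolding reachable_def by blast
  from walk_minus_or[OF xs(1), of f] xs(2,3)
  have "reachable (EE - {f}) (cs ! 0) u \<or> (\<exists>w\<in>f. reachable (EE - {f}) (cs ! 0) w)" by simp
  then show ?thesis using comp_c0[OF f(2)] uv by auto
qed

lemma nc_not_both:
  assumes f: "f \<in> EE" "f \<notin> cycle_edges cs" and uv: "f = {u,v}"
    and both: "u \<in> compC f" "v \<in> compC f"
  shows False
proof -
  have "reachable (EE - {f}) (cs ! 0) u" "reachable (EE - {f}) (cs ! 0) v"
    using both comp_c0[OF f(2)] by auto
  then have "reachable (EE - {f}) u v" using reach_sym reach_trans by blast
  then have c: "\<And>x y. x < n \<Longrightarrow> y < n \<Longrightarrow> reachable (EE - {f}) x y"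
    using reach_minus[OF uv] conn by blast
  have "cycle_edges cs \<subseteq> EE - {f}" using cyc_sub f(2) by blast
  then have "pwalk (EE - {f}) (cs ! 0) (cs ! 0) L" using pw_mono[OF cw_pw] by blast
  then show False using no_odd[OF f(1) c] oddl by blast
qed

lemma same_side:
  assumes "{a,b} \<in> EE" "{a,b} \<noteq> f"
  shows "a \<in> compC f \<longleftrightarrow> b \<in> compC f"
proof -
  have "reachable (EE - {f}) a b" using assms by (intro reach_edge) auto
  then show ?thesis using comp_closed reach_sym by blast
qed

lemma nc_par:
  assumes f: "f \<in> EE" "f \<notin> cycle_edges cs" and ab: "{a,b} \<in> EE" "{a,b} \<noteq> f"
    and a: "a \<notin> compC f"
  shows "ed f a \<noteq> ed f b"
proof
  assume eq: "ed f a = ed f b"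
  define t where "t = ed f a"
  have b: "b \<notin> compC f" using same_side[OF ab] a by simp
  obtain u v where uv: "f = {u,v}" "u \<noteq> v" using edges[OF f(1)] by blast
  have abn: "a < n" "b < n" using ab_lt[OF ab(1)] by auto
  obtain p where p: "p \<in> f" "pwalk (EE - {f}) p a t" using ed_walk[OF f(1) abn(1)] t_def by blast
  obtain q where q: "q \<in> f" "pwalk (EE - {f}) q b t" using ed_walk[OF f(1) abn(2)] t_def eq by auto
  have pc: "p \<notin> compC f" using comp_closed[OF _ pw_reach[OF p(2)]] a by blast
  have qc: "q \<notin> compC f" using comp_closed[OF _ pw_reach[OF q(2)]] b by blast
  have "p = q" using nc_one[OF f uv(1)] p(1) q(1) pc qc uv(1) by auto
  have eba: "pwalk (EE - {f}) b a 1" using ab by (intro pw_edge) (auto simp: insert_commute)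
  have q': "pwalk (EE - {f}) p b t" using q(2) \<open>p = q\<close> by simp
  have "pwalk (EE - {f}) a a (t + (t + 1))"
    using pw_trans[OF pw_sym[OF p(2)] pw_trans[OF q' eba]] by simp
  then obtain xs where xs: "walk (EE - {f}) xs" "hd xs = a" "last xs = a" "length xs = Suc (t + (t + 1))"
    unfolding pwalk_def by blast
  have notc: "\<forall>y\<in>set xs. y \<notin> compC f"
  proof
    fix y assume "y \<in> set xs"
    then have "reachable (EE - {f}) a y" using walk_reach_set[OF xs(1)] xs(2) by simp
    then have "reachable (EE - {f}) y a" by (rule reach_sym)
    then show "y \<notin> compC f" using comp_closed a by blast
  qed
  define g0 where "g0 = {cs ! 0, cs ! ((0 + 1) mod L)}"
  have g0c: "g0 \<in> cycle_edges cs" unfolding g0_def cycle_edges_def using L0 by blast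
  have g0E: "g0 \<in> EE" using g0c cyc_sub by blast
  have "cs ! 0 \<in> compC f" using comp_c0[OF f(2)] by simp
  moreover have "cs ! 0 \<in> g0" unfolding g0_def by simp
  ultimately have "walk ((EE - {f}) - {g0}) xs" using walk_avoid[OF xs(1) notc] by blast
  then have "walk (EE - {g0}) xs" by (rule walk_mono) blast
  then have "pwalk (EE - {g0}) a a (t + (t + 1))" unfolding pwalk_def using xs by blast
  moreover have "odd (t + (t + 1))" by simp
  ultimately show False using no_odd[OF g0E cyc_conn[OF g0c]] by blast
qed

end



lemma pm_one_sum: "(a::nat) = Suc b \<or> b = Suc a \<Longrightarrow> (-1::real) ^ a + (-1) ^ b = 0"
  by auto

context ug
begin

lemma ed_self: "f = {a,b} \<Longrightarrow> ed f a = 0"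
  by (simp add: edge_dist_pair)

lemma ed_adj:
  assumes "f \<in> EE" "{a,b} \<in> EE" "ed f a \<noteq> ed f b"
  shows "ed f a = Suc (ed f b) \<or> ed f b = Suc (ed f a)"
proof -
  have "ed f b \<le> Suc (ed f a)" using ed_le[OF assms(1,2)] .
  moreover have "ed f a \<le> Suc (ed f b)" using ed_le[OF assms(1)] assms(2) by (simp add: insert_commute)
  ultimately show ?thesis using assms(3) by linarith
qed

definition val :: "nat \<Rightarrow> nat \<Rightarrow> real" where
  "val i j = (if e i \<in> cycle_edges cs then (-1) ^ ed (e i) j / 2
     else if j \<in> compC (e i) then 0 else (-1) ^ ed (e i) j)"

lemma A_idx: "i < n \<Longrightarrow> j < n \<Longrightarrow> claimed_inverse n e cs $$ (i, j) = val i j"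
  unfolding claimed_inverse_def val_def by (simp add: Let_def)

lemma pair_sum:
  assumes "i < n" "k < n" and that: "e k = {a,b}" "a \<noteq> b"
  shows "val i a + val i b = (if i = k then 1 else 0)"
proof -
  let ?f = "e i"
  have fE: "?f \<in> EE" using assms by simp
  have abE: "{a,b} \<in> EE" using that assms by (metis image_eqI lessThan_iff)
  show ?thesis
  proof (cases "i = k")
    case True
    then have fab: "?f = {a,b}" using that by simp
    show ?thesis
    proof (cases "?f \<in> cycle_edges cs")
      case True
      have "ed ?f a = 0" "ed ?f b = 0" using ed_self[OF fab] ed_self[of ?f b a] fab
        by (auto simp: insert_commute)
      then show ?thesis using True \<open>i = k\<close> by (simp add: val_def)
    next
      case False
      have o: "a \<in> compC ?f \<or> b \<in> compC ?f" using nc_one[OF fE False fab] .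
      have nb: "\<not> (a \<in> compC ?f \<and> b \<in> compC ?f)" using nc_not_both[OF fE False fab] by blast
      have "ed ?f a = 0" "ed ?f b = 0" using ed_self[OF fab] ed_self[of ?f b a] fab
        by (auto simp: insert_commute)
      then show ?thesis using False \<open>i = k\<close> o nb by (auto simp: val_def)
    qed
  next
    case False
    then have ne: "{a,b} \<noteq> ?f" using that inj assms unfolding inj_on_def by (metis lessThan_iff)
    show ?thesis
    proof (cases "?f \<in> cycle_edges cs")
      case True
      have "ed ?f a \<noteq> ed ?f b" using cyc_par[OF True abE ne] .
      then have "ed ?f a = Suc (ed ?f b) \<or> ed ?f b = Suc (ed ?f a)" using ed_adj[OF fE abE] by blast
      then have "(-1::real) ^ ed ?f a + (-1) ^ ed ?f b = 0" by (rule pm_one_sum)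
      then show ?thesis using True False by (simp add: val_def add_divide_distrib[symmetric])
    next
      case nc: False
      have ss: "a \<in> compC ?f \<longleftrightarrow> b \<in> compC ?f" using same_side[OF abE ne] .
      show ?thesis
      proof (cases "a \<in> compC ?f")
        case True
        then show ?thesis using ss nc False by (simp add: val_def)
      next
        case na: False
        have "ed ?f a \<noteq> ed ?f b" using nc_par[OF fE nc abE ne na] .
        then have "ed ?f a = Suc (ed ?f b) \<or> ed ?f b = Suc (ed ?f a)" using ed_adj[OF fE abE] by blast
        then have "(-1::real) ^ ed ?f a + (-1) ^ ed ?f b = 0" by (rule pm_one_sum)
        then show ?thesis using na ss nc False by (simp add: val_def)
      qed
    qed
  qed
qed

lemma AM: "claimed_inverse n e cs * incidence_mat n e = 1\<^sub>m n"
proof (rule eq_matI)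
  show "dim_row (claimed_inverse n e cs * incidence_mat n e) = dim_row (1\<^sub>m n)"
    by (simp add: claimed_inverse_def)
  show "dim_col (claimed_inverse n e cs * incidence_mat n e) = dim_col (1\<^sub>m n)"
    by (simp add: incidence_mat_def)
  fix i k assume ik: "i < dim_row (1\<^sub>m n)" "k < dim_col (1\<^sub>m n)"
  then have i: "i < n" and k: "k < n" by auto
  obtain a b where ab: "e k = {a,b}" "a \<noteq> b" "a < n" "b < n"
    using edges[of "e k"] k by auto
  have "(claimed_inverse n e cs * incidence_mat n e) $$ (i, k)
      = (\<Sum>j\<in>{0..<n}. val i j * (if j \<in> e k then 1 else 0))"
    using i k by (simp add: claimed_inverse_def incidence_mat_def scalar_prod_def val_def Let_def)
  also have "\<dots> = (\<Sum>j\<in>{0..<n} \<inter> e k. val i j)"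
    by (simp add: sum.inter_restrict[symmetric] if_distrib cong: if_cong)
  also have "{0..<n} \<inter> e k = {a,b}" using ab by auto
  also have "(\<Sum>j\<in>{a,b}. val i j) = val i a + val i b" using ab by simp
  also have "\<dots> = (if i = k then 1 else 0)" using pair_sum[OF i k ab(1,2)] .
  finally show "(claimed_inverse n e cs * incidence_mat n e) $$ (i, k) = 1\<^sub>m n $$ (i, k)"
    using i k by simp
qed

lemma final:
  "invertible_mat (incidence_mat n e)
    \<and> incidence_mat n e * claimed_inverse n e cs = 1\<^sub>m n
    \<and> claimed_inverse n e cs * incidence_mat n e = 1\<^sub>m n"
proof -
  have Ac: "claimed_inverse n e cs \<in> carrier_mat n n" by (simp add: claimed_inverse_def)
  have Mc: "incidence_mat n e \<in> carrier_mat n n" by (simp add: incidence_mat_def)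
  have MA: "incidence_mat n e * claimed_inverse n e cs = 1\<^sub>m n"
    by (rule mat_mult_left_right_inverse[OF Ac Mc AM])
  have "invertible_mat (incidence_mat n e)"
    unfolding invertible_mat_def inverts_mat_def using MA AM Mc Ac
    by (intro conjI exI[of _ "claimed_inverse n e cs"]) (auto simp: square_mat.simps)
  then show ?thesis using MA AM by simp
qed

end


theorem mainTheorem5:
  fixes n :: nat and e :: "nat \<Rightarrow> nat set" and cs :: "nat list"
  assumes "unicyclic n e"
    and "is_cycle (e ` {..<n}) cs"
    and "odd (length cs)"
  shows "invertible_mat (incidence_mat n e)
    \<and> incidence_mat n e * claimed_inverse n e cs = 1\<^sub>m n
    \<and> claimed_inverse n e cs * incidence_mat n e = 1\<^sub>m n"
proof -
  interpret ug n e cs using assms by unfold_locales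
  show ?thesis by (rule final)
qed

end
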